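(* Let $N\ge 1$ be an integer, let $\Gamma$ be the principled parametric grammar $\Gamma^{(N)}$ defined below, and let $w$ be the string defined below. If $P,Q$ are positive integers with $P\le Q$ and $PQ=N$, then $w\in L(\Gamma_{s_P})$.
   Context: Let $a=\lceil\log_2\sqrt N\rceil$ and $b=\lceil\log_2 N\rceil$. The grammar $\Gamma^{(N)}$ has nonterminals $\mathtt S$, $A_0,\dots,A_a$, $B_0,\dots,B_a$, $C_0,\dots,C_{b+1}$, $Z_0,\dots,Z_b$, terminals $c_0,\dots,c_b$, and start symbol $\mathtt S$. Its rules are string-rewriting productions $\alpha\to\beta$ (possibly with more than one symbol on the left). Fixed rules (present for every parameter setting): $\mathtt S\to A_a\mathtt S$; $\mathtt S\to\varepsilon$; $B_j\to B_{j-1}B_{j-1}$ for $1\le j\le a$; $B_0\to C_0$; and for each $k\in\{0,\dots,b\}$: $C_kC_k\to C_kZ_k$, $C_kZ_k\to C_{k+1}Z_k$, $C_{k+1}Z_k\to C_{k+1}$, and $C_k\to c_k$. Parametric groups (exactly one alternative is chosen from each): $(A_0\to B_0,\ A_0\to\varepsilon)$, and for each $j\in\{1,\dots,a\}$, $(A_j\to A_{j-1},\ A_j\to B_jA_{j-1})$. A parameter setting $s$ is a choice of one alternative from each parametric group; $\Gamma_s$ is the grammar whose rules are the fixed rules together with the chosen alternatives, and $L(\Gamma_s)$ is the set of terminal strings derivable from $\mathtt S$. To $s$ associate bits $p_0,\dots,p_a$: $p_0=1$ iff $A_0\to B_0$ is chosen, and for $j\ge1$, $p_j=1$ iff $A_j\to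 B_jA_{j-1}$ is chosen; put $P_s=\sum_{j=0}^a p_j2^j$. Conversely, for an integer $0\le P<2^{a+1}$, $s_P$ is the setting whose bits are the binary digits of $P$. The string $w$ is $c_{i_1}c_{i_2}\cdots c_{i_r}$, where $i_1<\dots<i_r$ are the positions (counting from $0$ at the least significant digit) of the digits equal to $1$ in the binary representation of $N$. *)

theory Defs
  imports Complex_Main
begin

datatype sym = Start | A nat | B nat | C nat | Z nat | Tm nat

definition par_a :: "nat \<Rightarrow> nat" where
  "par_a N = nat \<lceil>log 2 (sqrt (real N))\<rceil>"

definition par_b :: "nat \<Rightarrow> nat" where
  "par_b N = nat \<lceil>log 2 (real N)\<rceil>"

text \<open>A parameter setting is given by its bits p_0..p_a (p j = True iff bit j is 1).
  Rules of Gamma_s as string-rewriting productions (lhs, rhs).\<close>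
definition rules :: "nat \<Rightarrow> (nat \<Rightarrow> bool) \<Rightarrow> (sym list \<times> sym list) set" where
  "rules N p =
     {([Start], [A (par_a N), Start]), ([Start], [])}
   \<union> {([B j], [B (j - 1), B (j - 1)]) | j. 1 \<le> j \<and> j \<le> par_a N}
   \<union> {([B 0], [C 0])}
   \<union> {([C k, C k], [C k, Z k]) | k. k \<le> par_b N}
   \<union> {([C k, Z k], [C (Suc k), Z k]) | k. k \<le> par_b N}
   \<union> {([C (Suc k), Z k], [C (Suc k)]) | k. k \<le> par_b N}
   \<union> {([C k], [Tm k]) | k. k \<le> par_b N}
   \<union> {([A 0], if p 0 then [B 0] else [])}
   \<union> {([A j], if p j then [B j, A (j - 1)] else [A (j - 1)]) | j. 1 \<le> j \<and> j \<le> par_a N}"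

definition rstep :: "(sym list \<times> sym list) set \<Rightarrow> sym list \<Rightarrow> sym list \<Rightarrow> bool" where
  "rstep R x y \<longleftrightarrow> (\<exists>u v l r. (l, r) \<in> R \<and> x = u @ l @ v \<and> y = u @ r @ v)"

text \<open>Language: terminal strings (lists of terminal indices k, standing for c_k) derivable from S.\<close>
definition lang :: "nat \<Rightarrow> (nat \<Rightarrow> bool) \<Rightarrow> nat list set" where
  "lang N p = {t. (rstep (rules N p))\<^sup>*\<^sup>* [Start] (map Tm t)}"

definition setting :: "nat \<Rightarrow> (nat \<Rightarrow> bool)" where
  "setting P = (\<lambda>j. odd (P div 2 ^ j))"

text \<open>The string w: indices of the 1-digits of N in increasing order (all such positions are \<le> N).\<close>
definition wstr :: "nat \<Rightarrow> nat list" where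
  "wstr N = filter (\<lambda>i. odd (N div 2 ^ i)) [0..<Suc N]"

end

theory Submission
  imports Defs
begin

lemma rstep_ctx: "rstep R x y \<Longrightarrow> rstep R (u@x@v) (u@y@v)"
proof -
  assume "rstep R x y"
  then obtain u' v' l r where "(l,r) \<in> R" "x = u'@l@v'" "y = u'@r@v'" by (auto simp: rstep_def)
  then show ?thesis unfolding rstep_def
    by (rule_tac x="u@u'" in exI, rule_tac x="v'@v" in exI, auto)
qed

lemma der_ctx: "(rstep R)\<^sup>*\<^sup>* x y \<Longrightarrow> (rstep R)\<^sup>*\<^sup>* (u@x@v) (u@y@v)"
  by (induction rule: rtranclp_induct) (auto intro: rtranclp.rtrancl_into_rtrancl rstep_ctx)

lemma der_app: "(rstep R)\<^sup>*\<^sup>* x y \<Longrightarrow> (rstep R)\<^sup>*\<^sup>* x' y' \<Longrightarrow> (rstep R)\<^sup>*\<^sup>* (x@x') (y@y')"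
  using der_ctx[of R x y "[]" x'] der_ctx[of R x' y' y "[]"] by auto

lemma rule_der: "(l,r) \<in> R \<Longrightarrow> (rstep R)\<^sup>*\<^sup>* l r"
  unfolding rstep_def by (rule r_into_rtranclp) (rule_tac x="[]" in exI, rule_tac x="[]" in exI, auto)

lemma der_rep: "(rstep R)\<^sup>*\<^sup>* x y \<Longrightarrow> (rstep R)\<^sup>*\<^sup>* (concat (replicate n x)) (concat (replicate n y))"
  by (induction n) (auto intro: der_app)

lemma concat_rep_rep: "concat (replicate n (replicate m x)) = replicate (n*m) x"
  by (induction n) (auto simp: replicate_add)

fun bl :: "nat \<Rightarrow> nat list" where
  "bl m = (if m = 0 then [] else (if odd m then [0] else []) @ map Suc (bl (m div 2)))"

declare bl.simps[simp del]

lemma filter_bl: "m < 2^n \<Longrightarrow> filter (\<lambda>i. odd (m div 2^i)) [0..<n] = bl m"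
proof (induction n arbitrary: m)
  case 0 then show ?case by (simp add: bl.simps)
next
  case (Suc n)
  have e: "[0..<Suc n] = 0 # map Suc [0..<n]" by (simp add: upt_conv_Cons map_Suc_upt)
  have f: "filter (\<lambda>i. odd (m div 2^i)) (map Suc [0..<n]) = map Suc (filter (\<lambda>i. odd ((m div 2) div 2^i)) [0..<n])"
    by (simp add: filter_map o_def div_mult2_eq)
  have "m div 2 < 2^n" using Suc.prems by auto
  then have g: "filter (\<lambda>i. odd ((m div 2) div 2^i)) [0..<n] = bl (m div 2)" by (rule Suc.IH)
  show ?case
  proof (cases "m = 0")
    case True then show ?thesis by (simp add: bl.simps filter_False)
  next
    case False
    then show ?thesis unfolding e using f g by (subst bl.simps) auto
  qed
qed

lemma mod_pow2_Suc: "(P::nat) mod 2^(Suc n) = (if odd (P div 2^n) then 2^n else 0) + P mod 2^n"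
  using mod_mult2_eq[of P "2^n" 2] by (auto simp: mult.commute odd_iff_mod_2_eq_one)

lemma pow_ceil: "(x::real) \<ge> 1 \<Longrightarrow> x \<le> 2 ^ nat \<lceil>log 2 x\<rceil>"
proof -
  assume x: "x \<ge> 1"
  have l: "log 2 x \<ge> 0" using x by simp
  have "x = 2 powr log 2 x" using x by simp
  also have "\<dots> \<le> 2 powr real_of_int \<lceil>log 2 x\<rceil>" by (rule powr_mono) auto
  also have "real_of_int \<lceil>log 2 x\<rceil> = real (nat \<lceil>log 2 x\<rceil>)" using l by simp
  also have "2 powr real (nat \<lceil>log 2 x\<rceil>) = 2 ^ nat \<lceil>log 2 x\<rceil>" by (simp add: powr_realpow)
  finally show ?thesis .
qed

theorem mainTheorem5:
  fixes N P Q :: nat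
  assumes "N \<ge> 1" and "P > 0" and "Q > 0" and "P \<le> Q" and "P * Q = N"
  shows "wstr N \<in> lang N (setting P)"
proof -
  define R where "R = rules N (setting P)"
  define a where "a = par_a N"
  define b where "b = par_b N"
  have Bd: "j \<le> a \<Longrightarrow> (rstep R)\<^sup>*\<^sup>* [B j] (replicate (2^j) (C 0))" for j
  proof (induction j)
    case 0 then show ?case by (auto intro!: rule_der simp: R_def rules_def)
  next
    case (Suc j)
    have "(rstep R)\<^sup>*\<^sup>* [B (Suc j)] ([B j] @ [B j])"
      using Suc.prems by (auto intro!: rule_der simp: R_def rules_def a_def)
    also have "(rstep R)\<^sup>*\<^sup>* ([B j] @ [B j]) (replicate (2^j) (C 0) @ replicate (2^j) (C 0))"
    proof -
      have ih: "(rstep R)\<^sup>*\<^sup>* [B j] (replicate (2^j) (C 0))" using Suc by auto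
      show ?thesis using der_app[OF ih ih] .
    qed
    finally show ?case by (simp add: replicate_add[symmetric] mult_2)
  qed
  have Ad: "j \<le> a \<Longrightarrow> (rstep R)\<^sup>*\<^sup>* [A j] (replicate (P mod 2^(Suc j)) (C 0))" for j
  proof (induction j)
    case 0
    show ?case
    proof (cases "odd P")
      case True
      have "(rstep R)\<^sup>*\<^sup>* [A 0] [B 0]" using True
        by (auto intro!: rule_der simp: R_def rules_def setting_def)
      also have "(rstep R)\<^sup>*\<^sup>* [B 0] [C 0]" by (auto intro!: rule_der simp: R_def rules_def)
      finally show ?thesis using True by (simp add: odd_iff_mod_2_eq_one)
    next
      case False
      have "(rstep R)\<^sup>*\<^sup>* [A 0] []" using False
        by (auto intro!: rule_der simp: R_def rules_def setting_def)
      then show ?thesis using False by (simp add: even_iff_mod_2_eq_zero)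
    qed
  next
    case (Suc j)
    show ?case
    proof (cases "odd (P div 2^(Suc j))")
      case True
      have "(rstep R)\<^sup>*\<^sup>* [A (Suc j)] ([B (Suc j)] @ [A j])" using True Suc.prems
        by (auto intro!: rule_der simp: R_def rules_def setting_def a_def)
      also have "(rstep R)\<^sup>*\<^sup>* ([B (Suc j)] @ [A j]) (replicate (2^Suc j) (C 0) @ replicate (P mod 2^(Suc j)) (C 0))"
        using der_app[OF Bd[of "Suc j"] Suc.IH] Suc.prems by simp
      finally show ?thesis using True mod_pow2_Suc[of P "Suc j"] by (simp add: replicate_add[symmetric])
    next
      case False
      have "(rstep R)\<^sup>*\<^sup>* [A (Suc j)] [A j]" using False Suc.prems
        by (auto intro!: rule_der simp: R_def rules_def setting_def a_def)
      also have "(rstep R)\<^sup>*\<^sup>* [A j] (replicate (P mod 2^(Suc j)) (C 0))"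
        using Suc by auto
      finally show ?thesis using False mod_pow2_Suc[of P "Suc j"] by simp
    qed
  qed
  have Mg: "k \<le> b \<Longrightarrow> (rstep R)\<^sup>*\<^sup>* (replicate (2*m) (C k)) (replicate m (C (Suc k)))" for k m
  proof -
    assume k: "k \<le> b"
    have "(rstep R)\<^sup>*\<^sup>* [C k, C k] [C k, Z k]" using k by (auto intro!: rule_der simp: R_def rules_def b_def)
    also have "(rstep R)\<^sup>*\<^sup>* [C k, Z k] [C (Suc k), Z k]" using k by (auto intro!: rule_der simp: R_def rules_def b_def)
    also have "(rstep R)\<^sup>*\<^sup>* [C (Suc k), Z k] [C (Suc k)]" using k by (auto intro!: rule_der simp: R_def rules_def b_def)
    finally have "(rstep R)\<^sup>*\<^sup>* (concat (replicate m [C k, C k])) (concat (replicate m [C (Suc k)]))"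
      by (rule der_rep)
    moreover have "concat (replicate m [C k, C k]) = replicate (2*m) (C k)"
      using concat_rep_rep[of m 2 "C k"] by (simp add: numeral_2_eq_2 mult.commute)
    moreover have "concat (replicate m [C (Suc k)]) = replicate m (C (Suc k))"
      using concat_rep_rep[of m 1 "C (Suc k)"] by simp
    ultimately show ?thesis by simp
  qed
  have Cnt: "\<And>k. k \<le> Suc b \<Longrightarrow> m < 2^(Suc b - k) \<Longrightarrow> (rstep R)\<^sup>*\<^sup>* (replicate m (C k)) (map Tm (map ((+) k) (bl m)))" for m
  proof (induction m rule: less_induct)
    case (less m k)
    show ?case
    proof (cases "m = 0")
      case True then show ?thesis by (simp add: bl.simps)
    next
      case False
      have kb: "k \<le> b" using less.prems False
        by (metis Suc_leI diff_is_0_eq le_antisym less_one neq0_conv power_0 not_less_eq_eq)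
      have lt: "m div 2 < m" using False by simp
      have bd: "m div 2 < 2^(Suc b - Suc k)" using less.prems kb
        by (simp add: Suc_diff_le less_mult_imp_div_less mult.commute)
      have ih: "(rstep R)\<^sup>*\<^sup>* (replicate (m div 2) (C (Suc k))) (map Tm (map ((+) (Suc k)) (bl (m div 2))))"
        using less.IH[OF lt, of "Suc k"] kb bd by (simp only: Suc_le_mono)
      have mg: "(rstep R)\<^sup>*\<^sup>* (replicate (2 * (m div 2)) (C k)) (replicate (m div 2) (C (Suc k)))"
        using Mg kb by blast
      have blm: "map ((+) k) (bl m) = (if odd m then [k] else []) @ map ((+) (Suc k)) (bl (m div 2))"
        using False by (subst bl.simps) (simp add: o_def)
      show ?thesis
      proof (cases "odd m")
        case True
        have rm: "replicate m (C k) = [C k] @ replicate (2 * (m div 2)) (C k)"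
          using True by (metis odd_two_times_div_two_succ replicate_Suc append_Cons append_Nil Suc_eq_plus1)
        have t: "(rstep R)\<^sup>*\<^sup>* [C k] [Tm k]" using kb by (auto intro!: rule_der simp: R_def rules_def b_def)
        have "(rstep R)\<^sup>*\<^sup>* ([C k] @ replicate (2 * (m div 2)) (C k)) ([Tm k] @ map Tm (map ((+) (Suc k)) (bl (m div 2))))"
          by (rule der_app[OF t rtranclp_trans[OF mg ih]])
        then show ?thesis using rm blm True by simp
      next
        case False
        have "replicate m (C k) = replicate (2 * (m div 2)) (C k)" using False by simp
        then show ?thesis using rtranclp_trans[OF mg ih] blm False by simp
      qed
    qed
  qed
  have Nb: "N \<le> 2^b" 
  proof -
    have "real N \<le> 2 ^ nat \<lceil>log 2 (real N)\<rceil>" using pow_ceil[of "real N"] assms(1) by simp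
    then have "real N \<le> real (2 ^ nat \<lceil>log 2 (real N)\<rceil>)" by simp
    then show ?thesis by (simp only: of_nat_le_iff b_def par_b_def)
  qed
  have Pa: "P \<le> 2^a"
  proof -
    have "P * P \<le> N" using assms(4,5) mult_le_mono2[of P Q P] by simp
    then have "real P \<le> sqrt (real N)"
    proof -
      assume "P * P \<le> N"
      then have "real (P * P) \<le> real N" by (simp only: of_nat_le_iff)
      then have "(real P)^2 \<le> real N" by (simp add: power2_eq_square)
      then show ?thesis by (rule real_le_rsqrt)
    qed
    also have "sqrt (real N) \<le> 2 ^ a" using pow_ceil[of "sqrt (real N)"] assms(1) unfolding a_def par_a_def by simp
    finally have "real P \<le> real (2^a)" by simp
    then show ?thesis by (simp only: of_nat_le_iff)
  qed
  have S1: "(rstep R)\<^sup>*\<^sup>* [Start] (replicate n (A a) @ [Start])" for n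
  proof (induction n)
    case 0 then show ?case by simp
  next
    case (Suc n)
    have "(rstep R)\<^sup>*\<^sup>* [Start] [A a, Start]" by (auto intro!: rule_der simp: R_def rules_def a_def)
    from der_app[OF rtranclp.rtrancl_refl[of _ "replicate n (A a)"] this]
    have h: "(rstep R)\<^sup>*\<^sup>* (replicate n (A a) @ [Start]) (replicate n (A a) @ [A a, Start])" .
    have e: "replicate n (A a) @ [A a, Start] = replicate (Suc n) (A a) @ [Start]" by (induction n) auto
    show ?case using rtranclp_trans[OF Suc h] e by simp
  qed
  have "(rstep R)\<^sup>*\<^sup>* [Start] []" by (auto intro!: rule_der simp: R_def rules_def)
  from S1[of Q] der_app[OF rtranclp.rtrancl_refl[of _ "replicate Q (A a)"] this]
  have st1: "(rstep R)\<^sup>*\<^sup>* [Start] (replicate Q (A a))" by simp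
  have "(0::nat) < 2^a" "(2::nat)^(Suc a) = 2*2^a" by simp_all
  then have "P < 2^(Suc a)" using Pa by linarith
  then have "P mod 2^(Suc a) = P" by (rule mod_less)
  then have "(rstep R)\<^sup>*\<^sup>* [A a] (replicate P (C 0))" using Ad[of a] by simp
  from der_rep[OF this, of Q] have st2: "(rstep R)\<^sup>*\<^sup>* (replicate Q (A a)) (replicate N (C 0))"
    using concat_rep_rep[of Q 1 "A a"] concat_rep_rep[of Q P "C 0"] assms(5) by (simp add: mult.commute)
  have st3: "(rstep R)\<^sup>*\<^sup>* (replicate N (C 0)) (map Tm (bl N))"
  proof -
    have "(0::nat) < 2^b" "(2::nat)^(Suc b) = 2*2^b" by simp_all
    then have "N < 2^(Suc b)" using Nb by linarith
    then have "N < 2^(Suc b - 0)" by simp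
    moreover have "map ((+) 0) (bl N) = bl N" by (simp add: map_idI)
    ultimately show ?thesis using Cnt[of 0 N] by simp
  qed
  have "N < 2^N" by (rule less_exp)
  moreover have "(2::nat)^(Suc N) = 2*2^N" by simp
  ultimately have "N < 2^(Suc N)" by linarith
  then have "wstr N = bl N" unfolding wstr_def by (rule filter_bl)
  then show ?thesis unfolding lang_def using st1 st2 st3 R_def by (auto elim: rtranclp_trans)
qed
end
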